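(* Let $G$ be a graph of order $n$ and let $uv$ be an edge of $\Lambda(G)$. Then there exist at least $n-3$ odd pairs of $G$ whose first component is $\{u,v\}$.
   Context: All graphs are simple and finite. For a graph $G$ and disjoint $X, Y \subseteq V(G)$, $E(X,Y)$ denotes the set of edges with one endpoint in $X$ and the other in $Y$. An ordered pair $(X,Y)$ of disjoint subsets of $V(G)$ with $|X|=|Y|=2$ is an odd pair of $G$ if $|E(X,Y)|$ is odd. A $2$-subset $\{u,v\}\subseteq V(G)$ is an odd set if it is the first component of some odd pair of $G$. The graph $\Lambda(G)$ has vertex set $V(G)$, and $uv$ is an edge of $\Lambda(G)$ iff $\{u,v\}$ is an odd set of $G$. *)

theory Defs
  imports Main
begin

definition simple_graph :: "'a set \<Rightarrow> 'a set set \<Rightarrow> bool" where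
  "simple_graph V E \<longleftrightarrow> finite V \<and> (\<forall>e\<in>E. e \<subseteq> V \<and> card e = 2)"

definition edges_between :: "'a set set \<Rightarrow> 'a set \<Rightarrow> 'a set \<Rightarrow> 'a set set" where
  "edges_between E X Y = {e \<in> E. \<exists>x\<in>X. \<exists>y\<in>Y. e = {x, y}}"

definition odd_pair :: "'a set \<Rightarrow> 'a set set \<Rightarrow> 'a set \<Rightarrow> 'a set \<Rightarrow> bool" where
  "odd_pair V E X Y \<longleftrightarrow> X \<subseteq> V \<and> Y \<subseteq> V \<and> X \<inter> Y = {} \<and> card X = 2 \<and> card Y = 2
     \<and> odd (card (edges_between E X Y))"

definition odd_set :: "'a set \<Rightarrow> 'a set set \<Rightarrow> 'a set \<Rightarrow> bool" where
  "odd_set V E S \<longleftrightarrow> (\<exists>Y. odd_pair V E S Y)"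

definition Lambda_edges :: "'a set \<Rightarrow> 'a set set \<Rightarrow> 'a set set" where
  "Lambda_edges V E = {{u, v} | u v. u \<in> V \<and> v \<in> V \<and> u \<noteq> v \<and> odd_set V E {u, v}}"

end

theory Submission
  imports Defs
begin

definition gc :: "'a set set \<Rightarrow> 'a \<Rightarrow> 'a \<Rightarrow> 'a \<Rightarrow> nat" where
  "gc E u v z = of_bool ({u,z} \<in> E) + of_bool ({v,z} \<in> E)"

lemma card_eb:
  assumes "u \<noteq> v" "a \<noteq> b" "a \<notin> {u,v}" "b \<notin> {u,v}"
  shows "card (edges_between E {u,v} {a,b}) = gc E u v a + gc E u v b"
proof -
  have eq: "edges_between E {u,v} {a,b} = {e \<in> {{u,a},{u,b},{v,a},{v,b}}. e \<in> E}"
    unfolding edges_between_def by blast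
  have d: "{u,a} \<noteq> {u,b}" "{u,a} \<noteq> {v,a}" "{u,a} \<noteq> {v,b}" "{u,b} \<noteq> {v,a}"
     "{u,b} \<noteq> {v,b}" "{v,a} \<noteq> {v,b}"
    using assms by (auto simp: doubleton_eq_iff)
  define A where "A = {{u,a},{u,b},{v,a},{v,b}}"
  have "card (edges_between E {u,v} {a,b}) = (\<Sum>e\<in>A. of_bool (e \<in> E))"
  proof -
    have "(\<Sum>e\<in>A. (of_bool (e \<in> E)::nat)) = of_nat (card (A \<inter> {e. e \<in> E}))"
      using sum_of_bool_eq[of A "\<lambda>e. e \<in> E"] by (simp add: A_def)
    moreover have "A \<inter> {e. e \<in> E} = edges_between E {u,v} {a,b}" unfolding eq A_def by blast
    ultimately show ?thesis by simp
  qed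
  also have "... = gc E u v a + gc E u v b"
    unfolding gc_def A_def using d by (simp add: insert_commute)
  finally show ?thesis .
qed

lemma dbl: "p \<in> {x,y} \<Longrightarrow> q \<in> {x,y} \<Longrightarrow> w1 \<notin> {x,y} \<Longrightarrow> w2 \<notin> {x,y}
  \<Longrightarrow> {p,w1} = {q,w2} \<Longrightarrow> w1 = w2"
  by (auto simp: doubleton_eq_iff)

theorem lemma3:
  fixes V :: "'a set" and E :: "'a set set" and u v :: 'a
  assumes "simple_graph V E"
    and "{u, v} \<in> Lambda_edges V E"
  shows "card {(X, Y). X = {u, v} \<and> odd_pair V E X Y} \<ge> card V - 3"
proof -
  have fin: "finite V" using assms(1) by (simp add: simple_graph_def)
  obtain u' v' where uv: "{u,v} = {u',v'}" "u' \<in> V" "v' \<in> V" "u' \<noteq> v'" "odd_set V E {u',v'}"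
    using assms(2) unfolding Lambda_edges_def by blast
  have uvV: "u \<in> V" "v \<in> V" "u \<noteq> v" using uv by (auto simp: doubleton_eq_iff)
  obtain Y where Y: "odd_pair V E {u,v} Y" using uv(1,5) odd_set_def by metis
  obtain x y where xy: "Y = {x,y}" "x \<noteq> y" using Y unfolding odd_pair_def
    by (meson card_2_iff)
  have xyV: "x \<in> V" "y \<in> V" "x \<notin> {u,v}" "y \<notin> {u,v}" using Y xy unfolding odd_pair_def by auto
  have oxy: "odd (gc E u v x + gc E u v y)"
    using Y xy card_eb[OF uvV(3) xy(2) xyV(3,4)] unfolding odd_pair_def by simp
  define S where "S = {(X, Y). X = {u, v} \<and> odd_pair V E X Y}"
  define W where "W = V - {u,v,x,y}"
  define h where "h w = (if odd (gc E u v x + gc E u v w) then ({u,v},{x,w}) else ({u,v},{y,w}))" for w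
  have finS: "finite S"
  proof (rule finite_subset[of _ "Pow V \<times> Pow V"])
    show "S \<subseteq> Pow V \<times> Pow V" unfolding S_def odd_pair_def by auto
  qed (use fin in auto)
  have hS: "h ` W \<subseteq> S"
  proof
    fix p assume "p \<in> h ` W"
    then obtain w where w: "w \<in> W" "p = h w" by blast
    have wV: "w \<in> V" "w \<notin> {u,v}" "w \<noteq> x" "w \<noteq> y" using w W_def by auto
    show "p \<in> S"
    proof (cases "odd (gc E u v x + gc E u v w)")
      case True
      then have "odd_pair V E {u,v} {x,w}"
        using card_eb[OF uvV(3), of x w E] wV xyV uvV unfolding odd_pair_def by auto
      then show ?thesis using True w unfolding h_def S_def by simp
    next
      case False
      then have "odd (gc E u v y + gc E u v w)" using oxy by auto
      then have "odd_pair V E {u,v} {y,w}"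
        using card_eb[OF uvV(3), of y w E] wV xyV uvV unfolding odd_pair_def by auto
      then show ?thesis using False w unfolding h_def S_def by simp
    qed
  qed
  have inj: "inj_on h W"
  proof
    fix w1 w2 assume "w1 \<in> W" "w2 \<in> W" "h w1 = h w2"
    moreover have "snd (h w) = {x,w} \<or> snd (h w) = {y,w}" for w unfolding h_def by simp
    ultimately obtain p q where "p \<in> {x,y}" "q \<in> {x,y}" "{p,w1} = {q,w2}"
      by (metis insertCI)
    moreover have "w1 \<notin> {x,y}" "w2 \<notin> {x,y}" using \<open>w1 \<in> W\<close> \<open>w2 \<in> W\<close> W_def by auto
    ultimately show "w1 = w2" using dbl by blast
  qed
  have notin: "({u,v},{x,y}) \<notin> h ` W"
  proof
    assume "({u,v},{x,y}) \<in> h ` W"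
    then obtain w where w: "w \<in> W" "h w = ({u,v},{x,y})" by auto
    have "w \<notin> {x,y}" using w W_def by auto
    moreover have "w \<in> snd (h w)" unfolding h_def by simp
    ultimately show False using w(2) by simp
  qed
  have inS: "({u,v},{x,y}) \<in> S" using Y xy S_def by simp
  have "card (insert ({u,v},{x,y}) (h ` W)) \<le> card S"
    using finS hS inS by (intro card_mono) auto
  moreover have "card (insert ({u,v},{x,y}) (h ` W)) = card W + 1"
    using notin inj fin W_def by (simp add: card_image)
  moreover have "card W = card V - 4"
  proof -
    have "{u,v,x,y} \<subseteq> V" using uvV xyV by auto
    moreover have "card {u,v,x,y} = 4" using uvV xyV xy by auto
    ultimately show ?thesis unfolding W_def using fin by (simp add: card_Diff_subset)
  qed
  ultimately show ?thesis unfolding S_def by linarith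
qed

end
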